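(* Let $f\colon\mathbb Z_2\to\mathbb Z_2$ be a transitive T-function which is uniformly differentiable modulo $4$, and let $x_0\in\mathbb Z_2$. For $n,i\ge 0$ put $\chi_n^i=\delta_n(f^i(x_0))\in\{0,1\}$. Then there exists a binary sequence $(y(i))_{i=0}^\infty$, which does not depend on $n$ and whose shortest period has length $2^K$ for some integer $0\le K\le N_2(f)$, such that for every $n\ge N_2(f)+1$ and every $i=0,1,2,\ldots$, $$\chi_n^{i+2^{n-1}}\equiv\chi_{n-1}^i+\chi_n^i+\chi_{n-1}^0+\chi_n^0+\chi_n^{2^{n-1}}+y(i)\pmod 2.$$
   Context: $\mathbb Z_2$ denotes the ring of 2-adic integers; every $x\in\mathbb Z_2$ has a unique expansion $x=\sum_{j\ge0}\delta_j(x)2^j$ with $\delta_j(x)\in\{0,1\}$, and $\operatorname{ord}_2 h$ denotes the 2-adic valuation of $h$. A T-function is a map $f\colon\mathbb Z_2\to\mathbb Z_2$ such that $a\equiv b\pmod{2^s}$ implies $f(a)\equiv f(b)\pmod{2^s}$ for all $s$ (equivalently, $f$ is 1-Lipschitz for the 2-adic metric); then $f\bmod 2^n$ is a well-defined map of $\mathbb Z/2^n\mathbb Z$. $f$ is transitive if for every $n\ge1$ the reduced map $f\bmod 2^n$ is a permutation of $\mathbb Z/2^n\mathbb Z$ consisting of a single cycle (of length $2^n$). $f^i$ denotes the $i$-th iterate, $f^0=\mathrm{id}$. Given $M\ge1$, $f$ is uniformly differentiable modulo $2^M$ if there exist a function $f'_M\colon\mathbb Z_2\to\mathbb Z_2$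 (the derivative modulo $2^M$) and $K\in\mathbb N$ such that for all $x\in\mathbb Z_2$ and all nonzero $h\in\mathbb Z_2$ with $h\equiv0\pmod{2^K}$ one has $f(x+h)\equiv f(x)+f'_M(x)\,h\pmod{2^{\operatorname{ord}_2h+M}}$; the least such $K$ is denoted $N_M(f)$. *)

theory Defs
  imports Main
begin

text \<open>A 2-adic integer is a compatible sequence of residues x n in {0..<2^n}.\<close>

typedef z2 = "{x :: nat \<Rightarrow> int. \<forall>n. 0 \<le> x n \<and> x n < 2 ^ n \<and> x (Suc n) mod 2 ^ n = x n}"
  by (rule exI[of _ "\<lambda>_. 0"]) simp

definition res :: "z2 \<Rightarrow> nat \<Rightarrow> int" where
  "res x n = Rep_z2 x n"

definition z2_of_int :: "int \<Rightarrow> z2" where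
  "z2_of_int k = Abs_z2 (\<lambda>n. k mod 2 ^ n)"

instantiation z2 :: "{zero, plus, times}"
begin
definition zero_z2_def: "0 = z2_of_int 0"
definition plus_z2_def: "a + b = Abs_z2 (\<lambda>n. (res a n + res b n) mod 2 ^ n)"
definition times_z2_def: "a * b = Abs_z2 (\<lambda>n. (res a n * res b n) mod 2 ^ n)"
instance ..
end

definition digit :: "nat \<Rightarrow> z2 \<Rightarrow> int" where
  "digit j x = res x (Suc j) div 2 ^ j"

definition ord2 :: "z2 \<Rightarrow> nat" where
  "ord2 h = (LEAST n. res h (Suc n) \<noteq> 0)"

definition is_T_function :: "(z2 \<Rightarrow> z2) \<Rightarrow> bool" where
  "is_T_function f \<longleftrightarrow> (\<forall>a b s. res a s = res b s \<longrightarrow> res (f a) s = res (f b) s)"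

definition red_map :: "(z2 \<Rightarrow> z2) \<Rightarrow> nat \<Rightarrow> int \<Rightarrow> int" where
  "red_map f n r = res (f (z2_of_int r)) n"

definition transitive :: "(z2 \<Rightarrow> z2) \<Rightarrow> bool" where
  "transitive f \<longleftrightarrow> (\<forall>n\<ge>1.
      bij_betw (red_map f n) {0..<2 ^ n} {0..<2 ^ n} \<and>
      (\<forall>r\<in>{0..<2 ^ n}. \<exists>i. (red_map f n ^^ i) 0 = r))"

definition udiff_with :: "(z2 \<Rightarrow> z2) \<Rightarrow> nat \<Rightarrow> nat \<Rightarrow> bool" where
  "udiff_with f M K \<longleftrightarrow> (\<exists>f' :: z2 \<Rightarrow> z2. \<forall>x h. h \<noteq> 0 \<and> res h K = 0 \<longrightarrow>
       res (f (x + h)) (ord2 h + M) = res (f x + f' x * h) (ord2 h + M))"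

definition unif_diff :: "(z2 \<Rightarrow> z2) \<Rightarrow> nat \<Rightarrow> bool" where
  "unif_diff f M \<longleftrightarrow> (\<exists>K. udiff_with f M K)"

definition N_const :: "nat \<Rightarrow> (z2 \<Rightarrow> z2) \<Rightarrow> nat" where
  "N_const M f = (LEAST K. udiff_with f M K)"

end

theory Submission
  imports Defs "HOL-Computational_Algebra.Primes"
begin

lemma res_prop: "0 \<le> res x n \<and> res x n < 2 ^ n \<and> res x (Suc n) mod 2 ^ n = res x n"
  using Rep_z2[of x] unfolding res_def by auto

lemma res_ge0[simp]: "0 \<le> res x n" using res_prop by blast
lemma res_less[simp]: "res x n < 2 ^ n" using res_prop by blast
lemma res_mod_self[simp]: "res x n mod 2 ^ n = res x n" by simp

lemma res_mod: "n \<le> m \<Longrightarrow> res x m mod 2 ^ n = res x n"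
proof (induction m rule: dec_induct)
  case base then show ?case by simp
next
  case (step m)
  have "res x (Suc m) mod 2 ^ n = (res x (Suc m) mod 2 ^ m) mod 2 ^ n"
    using step(1) by (simp add: mod_mod_cancel le_imp_power_dvd)
  then show ?case using res_prop[of x m] step by simp
qed

lemma res_0[simp]: "res x 0 = 0" using res_prop[of x 0] by simp

lemma res_eq_cong: "n \<le> m \<Longrightarrow> res x m = res y m \<Longrightarrow> res x n = res y n"
  by (metis res_mod)

lemma res_eq_iff: "x = y \<longleftrightarrow> (\<forall>n. res x n = res y n)"
  unfolding res_def using Rep_z2_inject by auto

definition mk :: "(nat \<Rightarrow> int) \<Rightarrow> z2" where
  "mk c = Abs_z2 (\<lambda>j. c j mod 2 ^ j)"

lemma res_mk:
  assumes "\<And>j. c (Suc j) mod 2 ^ j = c j mod 2 ^ j"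
  shows "res (mk c) j = c j mod 2 ^ j"
proof -
  have "(\<lambda>j. c j mod 2 ^ j) \<in> {x :: nat \<Rightarrow> int. \<forall>n. 0 \<le> x n \<and> x n < 2 ^ n \<and> x (Suc n) mod 2 ^ n = x n}"
  proof (simp, intro allI)
    fix n
    have "c (Suc n) mod (2 * 2 ^ n) mod 2 ^ n = c (Suc n) mod 2 ^ n"
      by (simp add: mod_mod_cancel)
    then show "c (Suc n) mod (2 * 2 ^ n) mod 2 ^ n = c n mod 2 ^ n" using assms by simp
  qed
  then show ?thesis unfolding mk_def res_def by (simp add: Abs_z2_inverse)
qed

lemma res_z2_of_int: "res (z2_of_int k) n = k mod 2 ^ n"
  unfolding z2_of_int_def by (fold mk_def) (rule res_mk, simp add: mod_mod_cancel)

lemma res_zero[simp]: "res 0 n = 0" unfolding zero_z2_def by (simp add: res_z2_of_int)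

lemma res_plus: "res (a + b) n = (res a n + res b n) mod 2 ^ n"
proof -
  have "a + b = mk (\<lambda>n. res a n + res b n)" unfolding plus_z2_def mk_def ..
  moreover have "res (mk (\<lambda>n. res a n + res b n)) n = (res a n + res b n) mod 2 ^ n"
    by (rule res_mk) (metis mod_add_eq res_prop)
  ultimately show ?thesis by simp
qed

lemma res_times: "res (a * b) n = (res a n * res b n) mod 2 ^ n"
proof -
  have "a * b = mk (\<lambda>n. res a n * res b n)" unfolding times_z2_def mk_def ..
  moreover have "res (mk (\<lambda>n. res a n * res b n)) n = (res a n * res b n) mod 2 ^ n"
    by (rule res_mk) (metis mod_mult_eq res_prop)
  ultimately show ?thesis by simp
qed

definition sub :: "z2 \<Rightarrow> z2 \<Rightarrow> z2" where
  "sub y x = mk (\<lambda>n. res y n - res x n)"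

lemma res_sub: "res (sub y x) n = (res y n - res x n) mod 2 ^ n"
  unfolding sub_def by (rule res_mk) (metis mod_diff_eq res_prop)

lemma add_sub: "x + sub y x = y"
  unfolding res_eq_iff res_plus res_sub by (simp add: mod_add_right_eq)

lemma card2: "card {0..<(2::int)^n} = 2^n"
proof -
  have "card {0..<(2::int)^n} = nat ((2::int)^n)" by (simp only: card_atLeastLessThan_int)
  also have "\<dots> = nat 2 ^ n" by (rule nat_power_eq) simp
  finally show ?thesis by simp
qed

lemma cycle_min:
  assumes reach: "\<forall>r\<in>S. \<exists>i. (g ^^ i) a = r" and fin: "finite S"
    and p: "0 < p" "(g ^^ p) a = a"
  shows "card S \<le> p"
proof -
  have "(g ^^ i) a = (g ^^ (i mod p)) a" for i
  proof -
    have "(g ^^ (p * k)) a = a" for k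
      by (induction k) (simp_all add: funpow_add p(2))
    then have "(g ^^ (i mod p + p * (i div p))) a = (g ^^ (i mod p)) a"
      by (simp only: funpow_add o_apply)
    moreover have "i mod p + p * (i div p) = i" by (rule mod_mult_div_eq)
    ultimately show ?thesis by simp
  qed
  then have "S \<subseteq> (\<lambda>i. (g ^^ i) a) ` {..<p}"
  proof (intro subsetI)
    fix r assume "r \<in> S"
    then obtain i where "(g ^^ i) a = r" using reach by blast
    then have "r = (g ^^ (i mod p)) a" using \<open>\<And>i. (g ^^ i) a = (g ^^ (i mod p)) a\<close> by simp
    moreover have "i mod p \<in> {..<p}" using p(1) by simp
    ultimately show "r \<in> (\<lambda>i. (g ^^ i) a) ` {..<p}" by blast
  qed
  then have "card S \<le> card ((\<lambda>i. (g ^^ i) a) ` {..<p})" by (intro card_mono) auto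
  also have "\<dots> \<le> card {..<p}" by (rule card_image_le) simp
  finally have "card S \<le> card {..<p}" .
  then show ?thesis by simp
qed

lemma cycle:
  assumes bij: "bij_betw g S S" and fin: "finite S" and aS: "a \<in> S"
    and reach: "\<forall>r\<in>S. \<exists>i. (g ^^ i) a = r"
  shows "\<forall>r\<in>S. (g ^^ card S) r = r"
    and "\<forall>r\<in>S. \<forall>p. 0 < p \<and> p < card S \<longrightarrow> (g ^^ p) r \<noteq> r"
proof -
  have bijk: "bij_betw (g ^^ k) S S" for k using bij_betw_funpow[OF bij] .
  have inS: "(g ^^ k) a \<in> S" for k using bijk aS bij_betw_apply by fast
  have injk: "inj_on (g ^^ k) S" for k using bijk bij_betw_def by blast
  have "\<not> inj_on (\<lambda>i. (g ^^ i) a) {..card S}"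
  proof
    assume "inj_on (\<lambda>i. (g ^^ i) a) {..card S}"
    then have "card ((\<lambda>i. (g ^^ i) a) ` {..card S}) = card {..card S}" by (rule card_image)
    moreover have "(\<lambda>i. (g ^^ i) a) ` {..card S} \<subseteq> S" using inS by auto
    moreover have "card ((\<lambda>i. (g ^^ i) a) ` {..card S}) \<le> card S"
      by (rule card_mono[OF fin]) (use inS in auto)
    ultimately show False by simp
  qed
  then obtain a1 b1 where ab: "a1 \<le> card S" "b1 \<le> card S" "a1 \<noteq> b1" "(g ^^ a1) a = (g ^^ b1) a"
    unfolding inj_on_def by blast
  have "\<exists>c d. c < d \<and> d \<le> card S \<and> (g ^^ c) a = (g ^^ d) a"
  proof (cases "a1 < b1")
    case True then show ?thesis using ab by blast
  next
    case False then have "b1 < a1" using ab(3) by simp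
    then show ?thesis using ab by (intro exI[of _ b1] exI[of _ a1]) simp
  qed
  then obtain c d where cd: "c < d" "d \<le> card S" "(g ^^ c) a = (g ^^ d) a" by blast
  have "(g ^^ c) ((g ^^ (d - c)) a) = (g ^^ c) a"
  proof -
    have "(g ^^ c) ((g ^^ (d - c)) a) = (g ^^ (c + (d - c))) a" by (simp add: funpow_add)
    also have "c + (d - c) = d" using cd by simp
    finally show ?thesis using cd by simp
  qed
  then have per: "(g ^^ (d - c)) a = a" using injk[of c] inS aS unfolding inj_on_def by blast
  then have "card S \<le> d - c" using cycle_min[OF reach fin] cd by simp
  then have "d - c = card S" using cd by simp
  with per have pa: "(g ^^ card S) a = a" by simp
  show "\<forall>r\<in>S. (g ^^ card S) r = r"
  proof
    fix r assume "r \<in> S"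
    then obtain i where "(g ^^ i) a = r" using reach by blast
    have "(g ^^ card S) ((g ^^ i) a) = (g ^^ (card S + i)) a" by (simp add: funpow_add)
    also have "\<dots> = (g ^^ (i + card S)) a" by (simp add: add.commute)
    also have "\<dots> = (g ^^ i) a" using pa by (simp add: funpow_add)
    finally show "(g ^^ card S) r = r" using \<open>(g ^^ i) a = r\<close> by simp
  qed
  show "\<forall>r\<in>S. \<forall>p. 0 < p \<and> p < card S \<longrightarrow> (g ^^ p) r \<noteq> r"
  proof (intro ballI allI impI)
    fix r p assume r: "r \<in> S" and p: "0 < p \<and> p < card S"
    then obtain i where i: "(g ^^ i) a = r" using reach by blast
    show "(g ^^ p) r \<noteq> r"
    proof
      assume "(g ^^ p) r = r"
      have "(g ^^ i) ((g ^^ p) a) = (g ^^ (i + p)) a" by (simp add: funpow_add)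
      also have "\<dots> = (g ^^ (p + i)) a" by (simp add: add.commute)
      also have "\<dots> = (g ^^ p) r" using i by (simp add: funpow_add)
      finally have "(g ^^ i) ((g ^^ p) a) = (g ^^ i) a" using i \<open>(g ^^ p) r = r\<close> by simp
      then have "(g ^^ p) a = a" using injk[of i] inS aS unfolding inj_on_def by blast
      then show False using cycle_min[OF reach fin, of p] p by linarith
    qed
  qed
qed

lemma T_res: "is_T_function f \<Longrightarrow> res (f x) n = red_map f n (res x n)"
proof -
  assume T: "is_T_function f"
  have "res (z2_of_int (res x n)) n = res x n" by (simp add: res_z2_of_int)
  then show ?thesis using T unfolding is_T_function_def red_map_def by metis
qed

lemma T_orbit: "is_T_function f \<Longrightarrow> res ((f ^^ i) x) n = (red_map f n ^^ i) (res x n)"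
  by (induction i) (simp_all add: T_res)

lemma orbit_period:
  assumes T: "is_T_function f" and tr: "transitive f"
  shows "res ((f ^^ (i + 2 ^ n)) x) n = res ((f ^^ i) x) n"
proof (cases "n = 0")
  case True then show ?thesis by simp
next
  case False
  let ?g = "red_map f n" and ?S = "{0..<(2::int) ^ n}"
  have c: "card ?S = 2 ^ n" by (rule card2)
  have b: "bij_betw ?g ?S ?S" "\<forall>r\<in>?S. \<exists>i. (?g ^^ i) 0 = r"
    using tr False unfolding transitive_def by auto
  have r: "res ((f ^^ i) x) n \<in> ?S" by simp
  have "(?g ^^ (2 ^ n)) (res ((f ^^ i) x) n) = res ((f ^^ i) x) n"
    using cycle(1)[OF b(1) _ _ b(2)] r unfolding c by simp
  moreover have "res ((f ^^ (i + 2 ^ n)) x) n = (?g ^^ (2 ^ n + i)) (res x n)"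
    by (simp add: T_orbit[OF T] add.commute)
  ultimately show ?thesis by (simp add: funpow_add T_orbit[OF T])
qed

lemma orbit_noperiod:
  assumes T: "is_T_function f" and tr: "transitive f"
  shows "res ((f ^^ (i + 2 ^ m)) x) (Suc m) \<noteq> res ((f ^^ i) x) (Suc m)"
proof -
  let ?g = "red_map f (Suc m)" and ?S = "{0..<(2::int) ^ Suc m}"
  have c: "card ?S = 2 ^ Suc m" by (rule card2)
  have b: "bij_betw ?g ?S ?S" "\<forall>r\<in>?S. \<exists>i. (?g ^^ i) 0 = r"
    using tr unfolding transitive_def by auto
  have r: "res ((f ^^ i) x) (Suc m) \<in> ?S" using res_less[of "(f ^^ i) x" "Suc m"] by simp
  have "(?g ^^ (2 ^ m)) (res ((f ^^ i) x) (Suc m)) \<noteq> res ((f ^^ i) x) (Suc m)"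
    using cycle(2)[OF b(1) _ _ b(2)] r unfolding c by simp
  moreover have "res ((f ^^ (i + 2 ^ m)) x) (Suc m) = (?g ^^ (2 ^ m + i)) (res x (Suc m))"
    by (simp add: T_orbit[OF T] add.commute)
  ultimately show ?thesis by (simp add: funpow_add T_orbit[OF T])
qed

lemma mod_range_eq: "0 \<le> (a::int) \<Longrightarrow> a < M \<Longrightarrow> 0 \<le> b \<Longrightarrow> b < M \<Longrightarrow> (a - b) mod M = 0 \<Longrightarrow> a = b"
  by (metis mod_eq_dvd_iff mod_pos_pos_trivial mod_0 dvd_eq_mod_eq_0)

lemma res_sub_zero: "j \<le> k \<Longrightarrow> res y k = res x k \<Longrightarrow> res (sub y x) j = 0"
  using res_eq_cong[of j k y x] by (simp add: res_sub)

lemma res_sub_nz: "res y j \<noteq> res x j \<Longrightarrow> res (sub y x) j \<noteq> 0"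
  using mod_range_eq[of "res y j" "2^j" "res x j"] by (auto simp: res_sub)

lemma ord2_sub:
  assumes "res y k = res x k" "res y (Suc k) \<noteq> res x (Suc k)"
  shows "ord2 (sub y x) = k"
  unfolding ord2_def
proof (rule Least_equality)
  show "res (sub y x) (Suc k) \<noteq> 0" using res_sub_nz assms(2) .
next
  fix j assume "res (sub y x) (Suc j) \<noteq> 0"
  then show "k \<le> j" using res_sub_zero[of "Suc j" k y x] assms(1) by (cases "k \<le> j") auto
qed

definition UDF :: "(z2 \<Rightarrow> z2) \<Rightarrow> (z2 \<Rightarrow> z2) \<Rightarrow> nat \<Rightarrow> bool" where
  "UDF f f' N \<longleftrightarrow> (\<forall>x h. h \<noteq> 0 \<and> res h N = 0 \<longrightarrow>
       res (f (x + h)) (ord2 h + 2) = res (f x + f' x * h) (ord2 h + 2))"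

lemma UD:
  assumes udf: "UDF f f' N" and k: "N \<le> k" and e: "res y k = res x k"
    and ne: "res y (Suc k) \<noteq> res x (Suc k)"
  shows "(2::int)^(k+2) dvd (res (f y) (k+2) - res (f x) (k+2) - res (f' x) (k+2) * (res y (k+2) - res x (k+2)))"
proof -
  let ?h = "sub y x"
  have h0: "?h \<noteq> 0" using res_sub_nz[OF ne] by (metis res_zero)
  have hN: "res ?h N = 0" using res_sub_zero[OF k e] .
  have o: "ord2 ?h = k" using ord2_sub[OF e ne] .
  have "res (f (x + ?h)) (k + 2) = res (f x + f' x * ?h) (k + 2)"
    using udf h0 hN o unfolding UDF_def by metis
  then have eq: "res (f y) (k+2) = (res (f x) (k+2) + (res (f' x) (k+2) * ((res y (k+2) - res x (k+2)) mod 2^(k+2))) mod 2^(k+2)) mod 2^(k+2)"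
    by (simp add: add_sub res_plus res_times res_sub)
  let ?M = "(2::int)^(k+2)" and ?A = "res (f x) (k+2)" and ?F = "res (f' x) (k+2)" and ?d = "res y (k+2) - res x (k+2)"
  have "res (f y) (k+2) mod ?M = (?A + ?F * ?d) mod ?M"
    unfolding eq by (simp add: mod_simps)
  then have "?M dvd res (f y) (k+2) - (?A + ?F * ?d)" by (simp add: mod_eq_dvd_iff)
  then show ?thesis by (simp add: algebra_simps)
qed

lemma lin_dvd:
  fixes M :: int
  assumes "M dvd a - a'" "M dvd b - b'" "M dvd c - c'" "M dvd d - d'" "M dvd e - e'"
  shows "M dvd (a - b - c * (d - e)) - (a' - b' - c' * (d' - e'))"
proof -
  have "(a - b - c * (d - e)) - (a' - b' - c' * (d' - e')) =
        (a - a') - (b - b') - ((c - c') * (d - e) + c' * ((d - d') - (e - e')))"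
    by (simp add: algebra_simps)
  then show ?thesis using assms by (metis dvd_diff dvd_add dvd_mult dvd_mult2)
qed

lemma res_dvd: "i \<le> j \<Longrightarrow> (2::int)^i dvd res u j - res u i"
  using res_mod[of i j u] by (metis mod_eq_dvd_iff res_mod_self)

lemma UD2:
  assumes udf: "UDF f f' N" and k: "N \<le> k" and e: "res y k = res x k"
    and ne: "res y (Suc k) \<noteq> res x (Suc k)" and i: "i \<le> k + 2"
  shows "(2::int)^i dvd (res (f y) i - res (f x) i - res (f' x) i * (res y i - res x i))"
proof -
  have a: "(2::int)^i dvd (res (f y) (k+2) - res (f x) (k+2) - res (f' x) (k+2) * (res y (k+2) - res x (k+2)))"
    using UD[OF udf k e ne] i by (meson dvd_trans le_imp_power_dvd)
  have "(2::int)^i dvd (res (f y) (k+2) - res (f x) (k+2) - res (f' x) (k+2) * (res y (k+2) - res x (k+2)))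
     - (res (f y) i - res (f x) i - res (f' x) i * (res y i - res x i))"
    by (rule lin_dvd) (use i res_dvd in auto)
  from dvd_diff[OF a this] show ?thesis by (simp add: algebra_simps)
qed

lemma four_dvd: "4 dvd (X::int) * u \<Longrightarrow> odd u \<Longrightarrow> 4 dvd X"
proof -
  assume a: "4 dvd X * u" "odd u"
  have "coprime (2::int) u" using a(2) by simp
  then have "coprime ((2::int) * 2) u" by (simp only: coprime_mult_left_iff)
  then have "coprime (4::int) u" by simp
  then show ?thesis using a(1) coprime_dvd_mult_left_iff by blast
qed

lemma res_diff_eq: "(2::int)^j dvd res y j - res x j \<Longrightarrow> res y j = res x j"
  using mod_range_eq[of "res y j" "2^j" "res x j"] by (simp add: dvd_eq_mod_eq_0)

lemma odd_part:
  assumes "res y k = res x k" "res y (Suc k) \<noteq> res x (Suc k)" "Suc k \<le> j"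
  obtains u where "res y j - res x j = 2^k * u" "odd u"
proof -
  have eq: "res y j - res x j = (res y j - res y k) - (res x j - res x k)" using assms(1) by simp
  have "(2::int)^k dvd res y j - res x j"
    unfolding eq using res_dvd[of k j y] res_dvd[of k j x] assms(3) by (simp add: dvd_diff)
  then obtain u where u: "res y j - res x j = 2^k * u" by blast
  have "odd u"
  proof
    assume "even u"
    then have "(2::int)^Suc k dvd res y j - res x j" using u by auto
    moreover have "res y (Suc k) - res x (Suc k) = (res y j - res x j) - (res y j - res y (Suc k)) + (res x j - res x (Suc k))"
      by simp
    ultimately have "(2::int)^Suc k dvd res y (Suc k) - res x (Suc k)"
      using res_dvd[of "Suc k" j y] res_dvd[of "Suc k" j x] assms(3) by (metis dvd_add dvd_diff)
    then show False using res_diff_eq assms(2) by blast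
  qed
  then show ?thesis using that u by blast
qed

lemma first_diff:
  assumes "res x N = res x' N" "x \<noteq> x'"
  obtains k where "N \<le> k" "res x' k = res x k" "res x' (Suc k) \<noteq> res x (Suc k)"
proof -
  have ex: "\<exists>j. res x' j \<noteq> res x j"
  proof (rule ccontr)
    assume "\<not> (\<exists>j. res x' j \<noteq> res x j)"
    then have "x' = x" unfolding res_eq_iff by simp
    then show False using assms(2) by simp
  qed
  define j0 where "j0 = (LEAST j. res x' j \<noteq> res x j)"
  have j0: "res x' j0 \<noteq> res x j0" unfolding j0_def using LeastI_ex[OF ex] .
  have lt: "j < j0 \<Longrightarrow> res x' j = res x j" for j
    using not_less_Least[of j "\<lambda>j. res x' j \<noteq> res x j"] unfolding j0_def by simp
  have "N < j0"
  proof (rule ccontr)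
    assume "\<not> N < j0"
    then have "res x' j0 = res x j0" using res_eq_cong[of j0 N x x'] assms(1) by simp
    then show False using j0 by simp
  qed
  define k where "k = j0 - 1"
  have jk: "j0 = Suc k" unfolding k_def using \<open>N < j0\<close> by simp
  show ?thesis
  proof (rule that)
    show "N \<le> k" using \<open>N < j0\<close> jk by simp
    show "res x' k = res x k" using lt[of k] jk by simp
    show "res x' (Suc k) \<noteq> res x (Suc k)" using j0 jk by simp
  qed
qed

lemma Fdep:
  assumes udf: "UDF f f' N" and xx: "res x N = res x' N"
  shows "res (f' x) 2 = res (f' x') 2"
proof (cases "x = x'")
  case True then show ?thesis by simp
next
  case False
  then obtain k where k: "N \<le> k" "res x' k = res x k" "res x' (Suc k) \<noteq> res x (Suc k)"
    using first_diff[OF xx] by blast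
  define z where "z = mk (\<lambda>j. 2 * res x' j - res x j)"
  have rz: "res z j = (2 * res x' j - res x j) mod 2 ^ j" for j
    unfolding z_def
  proof (rule res_mk)
    fix j
    have eq: "(2 * res x' (Suc j) - res x (Suc j)) - (2 * res x' j - res x j)
        = 2 * (res x' (Suc j) - res x' j) - (res x (Suc j) - res x j)" by (simp add: algebra_simps)
    have "(2::int)^j dvd (2 * res x' (Suc j) - res x (Suc j)) - (2 * res x' j - res x j)"
      unfolding eq by (rule dvd_diff[OF dvd_mult[OF res_dvd] res_dvd]) simp_all
    then show "(2 * res x' (Suc j) - res x (Suc j)) mod 2 ^ j = (2 * res x' j - res x j) mod 2 ^ j"
      by (simp only: mod_eq_dvd_iff)
  qed
  have rzd: "(2::int)^j dvd res z j - (2 * res x' j - res x j)" for j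
    unfolding rz by (simp add: mod_eq_dvd_iff[symmetric])
  let ?M = "(2::int)^(k+2)"
  have e1: "?M dvd res (f x') (k+2) - res (f x) (k+2) - res (f' x) (k+2) * (res x' (k+2) - res x (k+2))"
    by (rule UD2[OF udf k(1) k(2) k(3)]) simp
  have z1: "res z k = res x' k"
  proof (rule res_diff_eq)
    have "res z k - res x' k = (res z k - (2 * res x' k - res x k)) + (res x' k - res x k)" by simp
    also have "\<dots> = res z k - (2 * res x' k - res x k)" using k(2) by simp
    finally show "(2::int)^k dvd res z k - res x' k" using rzd[of k] by simp
  qed
  have z2: "res z (Suc k) \<noteq> res x' (Suc k)"
  proof
    assume "res z (Suc k) = res x' (Suc k)"
    then have "res x' (Suc k) - res x (Suc k) = - (res z (Suc k) - (2 * res x' (Suc k) - res x (Suc k)))" by simp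
    moreover have "(2::int)^Suc k dvd - (res z (Suc k) - (2 * res x' (Suc k) - res x (Suc k)))"
      using rzd[of "Suc k"] by (simp only: dvd_minus_iff)
    ultimately have "(2::int)^Suc k dvd res x' (Suc k) - res x (Suc k)" by simp
    then show False using res_diff_eq k(3) by blast
  qed
  have e2: "?M dvd res (f z) (k+2) - res (f x') (k+2) - res (f' x') (k+2) * (res z (k+2) - res x' (k+2))"
    by (rule UD2[OF udf k(1) z1 z2]) simp
  have z3: "res z (Suc k) = res x (Suc k)"
  proof (rule res_diff_eq)
    obtain u where u: "res x' (Suc k) - res x (Suc k) = 2^k * u" "odd u"
      using odd_part[OF k(2) k(3), of "Suc k"] by blast
    have "res z (Suc k) - res x (Suc k) = (res z (Suc k) - (2 * res x' (Suc k) - res x (Suc k))) + 2 * (res x' (Suc k) - res x (Suc k))"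
      by simp
    moreover have "(2::int)^Suc k dvd 2 * (res x' (Suc k) - res x (Suc k))" using u by simp
    ultimately show "(2::int)^Suc k dvd res z (Suc k) - res x (Suc k)"
      using dvd_add[OF rzd[of "Suc k"]] by presburger
  qed
  have z4: "res z (Suc (Suc k)) \<noteq> res x (Suc (Suc k))"
  proof
    assume a: "res z (Suc (Suc k)) = res x (Suc (Suc k))"
    obtain u where u: "res x' (k+2) - res x (k+2) = 2^k * u" "odd u"
      using odd_part[OF k(2) k(3), of "k+2"] by auto
    have eq: "2 * (res x' (k+2) - res x (k+2)) = - (res z (k+2) - (2 * res x' (k+2) - res x (k+2)))"
      using a by simp
    have dv: "(2::int)^(k+2) dvd - (res z (k+2) - (2 * res x' (k+2) - res x (k+2)))"
      using rzd[of "k+2"] by (simp only: dvd_minus_iff)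
    have "(2::int)^(k+2) dvd 2 * (res x' (k+2) - res x (k+2))" by (subst eq) (rule dv)
    then have "(2::int)^(k+2) dvd 2 * (2^k * u)" by (simp only: u(1))
    then have "(2::int)^k * 4 dvd 2^k * (2 * u)" by (simp add: power_add mult.commute mult.left_commute)
    then have "(4::int) dvd 2 * u" by simp
    then show False using u(2) by presburger
  qed
  have e3: "?M dvd res (f z) (k+2) - res (f x) (k+2) - res (f' x) (k+2) * (res z (k+2) - res x (k+2))"
    by (rule UD2[OF udf _ z3 z4]) (use k(1) in simp_all)
  let ?w = "res z (k+2) - (2 * res x' (k+2) - res x (k+2))"
  let ?Fa = "res (f' x) (k+2)" and ?Fb = "res (f' x') (k+2)"
  have "(?Fb - ?Fa) * (res x' (k+2) - res x (k+2)) =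
     (res (f z) (k+2) - res (f x) (k+2) - ?Fa * (res z (k+2) - res x (k+2)))
   - (res (f x') (k+2) - res (f x) (k+2) - ?Fa * (res x' (k+2) - res x (k+2)))
   - (res (f z) (k+2) - res (f x') (k+2) - ?Fb * (res z (k+2) - res x' (k+2)))
   - (?Fb - ?Fa) * ?w"
    by (simp add: algebra_simps)
  moreover have "?M dvd
     (res (f z) (k+2) - res (f x) (k+2) - ?Fa * (res z (k+2) - res x (k+2)))
   - (res (f x') (k+2) - res (f x) (k+2) - ?Fa * (res x' (k+2) - res x (k+2)))
   - (res (f z) (k+2) - res (f x') (k+2) - ?Fb * (res z (k+2) - res x' (k+2)))
   - (?Fb - ?Fa) * ?w"
    by (intro dvd_diff e1 e2 e3 dvd_mult rzd)
  ultimately have "?M dvd (?Fb - ?Fa) * (res x' (k+2) - res x (k+2))" by simp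
  moreover obtain u where u: "res x' (k+2) - res x (k+2) = 2^k * u" "odd u"
    using odd_part[OF k(2) k(3), of "k+2"] by auto
  ultimately have "(2::int)^k * 4 dvd 2^k * ((?Fb - ?Fa) * u)"
    by (simp add: power_add mult.commute mult.left_commute)
  then have "4 dvd (?Fb - ?Fa) * u" by simp
  then have "4 dvd ?Fb - ?Fa" using four_dvd u(2) by blast
  then have "?Fb mod 4 = ?Fa mod 4" by (simp add: mod_eq_dvd_iff)
  moreover have "?Fb mod 4 = res (f' x') 2" "?Fa mod 4 = res (f' x) 2"
    using res_mod[of 2 "k+2"] by simp_all
  ultimately show ?thesis by simp
qed

lemma mod4_cases: "(x::int) mod 4 = 0 \<or> x mod 4 = 1 \<or> x mod 4 = 2 \<or> x mod 4 = 3"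
  by presburger

lemma comb4:
  fixes s0 si p :: int
  assumes "odd s0" "odd si" "4 dvd si - p * s0"
  shows "((si mod 4) div 2) mod 2 = ((s0 mod 4) div 2 + (p mod 4) div 2) mod 2"
proof -
  have e: "si mod 4 = ((p mod 4) * (s0 mod 4)) mod 4"
    using assms(3) by (metis mod_eq_dvd_iff mod_mult_eq)
  have s: "s0 mod 4 = 1 \<or> s0 mod 4 = 3" using assms(1) by presburger
  have t: "si mod 4 = 1 \<or> si mod 4 = 3" using assms(2) by presburger
  show ?thesis using mod4_cases[of p] s t e by auto
qed

lemma q4:
  fixes s0 s1 q v :: int
  assumes "odd s0" "odd v" "4 dvd s1 - q * s0" "s1 + s0 = 2 * v"
  shows "q mod 4 = 1"
proof -
  have e: "s1 mod 4 = ((q mod 4) * (s0 mod 4)) mod 4"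
    using assms(3) by (metis mod_eq_dvd_iff mod_mult_eq)
  have s: "s0 mod 4 = 1 \<or> s0 mod 4 = 3" using assms(1) by presburger
  have "(s1 + s0) mod 4 = 2" using assms(2,4) by presburger
  then have "(s1 mod 4 + s0 mod 4) mod 4 = 2" by (simp add: mod_add_eq)
  then show ?thesis using mod4_cases[of q] s e by auto
qed

lemma par: "odd (S::int) \<Longrightarrow> ((A + S) div 2) mod 2 = (A div 2 + A mod 2 + (S mod 4) div 2) mod 2"
  by presburger

lemma digit_arith:
  fixes a S :: int
  assumes "0 \<le> a" "odd S"
  shows "((a + 2^m * S) div 2^(Suc m)) mod 2 = (a div 2^(Suc m) + (a mod 2^(Suc m)) div 2^m + (S mod 4) div 2) mod 2"
proof -
  define A where "A = a div 2^m"
  have pm: "(2::int)^Suc m = 2^m * 2" by simp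
  have "(a + 2^m * S) div 2^m = A + S" unfolding A_def by simp
  then have b: "(a + 2^m * S) div 2^(Suc m) = (A + S) div 2" unfolding pm by (simp add: zdiv_zmult2_eq)
  have c: "a div 2^(Suc m) = A div 2" unfolding pm A_def by (simp add: zdiv_zmult2_eq)
  have "a mod 2^(Suc m) = 2^m * (A mod 2) + a mod 2^m" unfolding pm A_def by (simp add: zmod_zmult2_eq)
  then have d: "(a mod 2^(Suc m)) div 2^m = A mod 2" by simp
  show ?thesis unfolding b c d by (rule par[OF assms(2)])
qed

lemma min_period:
  fixes y :: "nat \<Rightarrow> int"
  assumes per: "\<forall>i. y (i + 2^N) = y i"
  shows "\<exists>K. K \<le> N \<and> (\<forall>i. y (i + 2 ^ K) = y i) \<and> (\<forall>p. 0 < p \<and> p < 2 ^ K \<longrightarrow> \<not> (\<forall>i. y (i + p) = y i))"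
proof -
  let ?P = "\<lambda>p. 0 < p \<and> (\<forall>i. y (i + p) = y i)"
  have ex: "?P (2^N)" using per by simp
  define p0 where "p0 = (LEAST p. ?P p)"
  have p0: "?P p0" unfolding p0_def by (rule LeastI[of ?P, OF ex])
  have least: "\<And>p. ?P p \<Longrightarrow> p0 \<le> p" unfolding p0_def by (rule Least_le)
  have mult: "y (i + p0 * k) = y i" for i k
  proof (induction k)
    case 0 then show ?case by simp
  next
    case (Suc k)
    have "y (i + p0 * Suc k) = y ((i + p0 * k) + p0)" by (simp add: algebra_simps)
    also have "\<dots> = y (i + p0 * k)" using p0 by blast
    finally show ?case using Suc by simp
  qed
  have "p0 dvd 2^N"
  proof (rule ccontr)
    assume nd: "\<not> p0 dvd 2^N"
    let ?r = "2^N mod p0"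
    have r0: "0 < ?r" using nd by (simp add: dvd_eq_mod_eq_0)
    have rl: "?r < p0" using p0 by simp
    have "y (i + ?r) = y i" for i
    proof -
      have "y (i + ?r) = y (i + ?r + p0 * (2^N div p0))" by (rule mult[symmetric])
      also have "i + ?r + p0 * (2^N div p0) = i + 2^N" by simp
      finally show ?thesis using per by (simp only:)
    qed
    then have "p0 \<le> ?r" using least r0 by blast
    then show False using rl by simp
  qed
  then obtain K where K: "K \<le> N" "p0 = 2^K" using divides_primepow_nat[OF two_is_prime_nat] by blast
  show ?thesis
  proof (intro exI conjI allI impI)
    show "K \<le> N" by (rule K(1))
    show "y (i + 2^K) = y i" for i using p0 K(2) by blast
    show "\<not> (\<forall>i. y (i + p) = y i)" if "0 < p \<and> p < 2^K" for p
      using least[of p] that K(2) by auto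
  qed
qed

definition Sv :: "(z2 \<Rightarrow> z2) \<Rightarrow> z2 \<Rightarrow> nat \<Rightarrow> nat \<Rightarrow> int" where
  "Sv f x0 m i = (res ((f ^^ (i + 2 ^ m)) x0) (m + 2) - res ((f ^^ i) x0) (m + 2)) div 2 ^ m"

definition Gv :: "(z2 \<Rightarrow> z2) \<Rightarrow> (z2 \<Rightarrow> z2) \<Rightarrow> z2 \<Rightarrow> nat \<Rightarrow> int" where
  "Gv f' f x0 j = res (f' ((f ^^ j) x0)) 2"

definition Pv :: "(z2 \<Rightarrow> z2) \<Rightarrow> (z2 \<Rightarrow> z2) \<Rightarrow> z2 \<Rightarrow> nat \<Rightarrow> int" where
  "Pv f' f x0 i = (\<Prod>j<i. Gv f' f x0 j)"

context
  fixes f f' :: "z2 \<Rightarrow> z2" and x0 :: z2 and N :: nat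
  assumes T: "is_T_function f" and tr: "transitive f" and udf: "UDF f f' N"
begin

lemma S_prop:
  "res ((f ^^ (i + 2 ^ m)) x0) (m + 2) - res ((f ^^ i) x0) (m + 2) = 2 ^ m * Sv f x0 m i
   \<and> odd (Sv f x0 m i)"
proof -
  have e: "res ((f ^^ (i + 2 ^ m)) x0) m = res ((f ^^ i) x0) m" by (rule orbit_period[OF T tr])
  have ne: "res ((f ^^ (i + 2 ^ m)) x0) (Suc m) \<noteq> res ((f ^^ i) x0) (Suc m)" by (rule orbit_noperiod[OF T tr])
  obtain u where u: "res ((f ^^ (i + 2 ^ m)) x0) (m + 2) - res ((f ^^ i) x0) (m + 2) = 2^m * u" "odd u"
    using odd_part[OF e ne, of "m+2"] by auto
  have "Sv f x0 m i = u" unfolding Sv_def u(1) by simp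
  then show ?thesis using u by simp
qed

lemma S_rec:
  assumes m: "N \<le> m"
  shows "4 dvd Sv f x0 m (Suc i) - Gv f' f x0 i * Sv f x0 m i"
proof -
  let ?y = "(f ^^ (i + 2 ^ m)) x0" and ?x = "(f ^^ i) x0"
  have e: "res ?y m = res ?x m" by (rule orbit_period[OF T tr])
  have ne: "res ?y (Suc m) \<noteq> res ?x (Suc m)" by (rule orbit_noperiod[OF T tr])
  have d: "(2::int)^(m+2) dvd res (f ?y) (m+2) - res (f ?x) (m+2) - res (f' ?x) (m+2) * (res ?y (m+2) - res ?x (m+2))"
    by (rule UD[OF udf m e ne])
  have fy: "f ?y = (f ^^ (Suc i + 2 ^ m)) x0" and fx: "f ?x = (f ^^ Suc i) x0" by simp_all
  let ?F = "res (f' ?x) (m+2)"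
  have "res (f ?y) (m+2) - res (f ?x) (m+2) - ?F * (res ?y (m+2) - res ?x (m+2))
      = 2^m * (Sv f x0 m (Suc i) - ?F * Sv f x0 m i)"
    unfolding fy fx using S_prop[of "Suc i" m] S_prop[of i m] by (simp add: algebra_simps)
  with d have "(2::int)^m * 4 dvd 2^m * (Sv f x0 m (Suc i) - ?F * Sv f x0 m i)"
    by (simp add: power_add)
  then have a: "4 dvd Sv f x0 m (Suc i) - ?F * Sv f x0 m i" by simp
  have "(2::int)^2 dvd ?F - res (f' ?x) 2" by (rule res_dvd) simp
  then have b: "4 dvd (?F - Gv f' f x0 i) * Sv f x0 m i" unfolding Gv_def by simp
  have eq: "Sv f x0 m (Suc i) - Gv f' f x0 i * Sv f x0 m i
     = (Sv f x0 m (Suc i) - ?F * Sv f x0 m i) + (?F - Gv f' f x0 i) * Sv f x0 m i"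
    by (simp add: algebra_simps)
  show ?thesis unfolding eq by (rule dvd_add[OF a b])
qed

lemma S_prod:
  assumes m: "N \<le> m"
  shows "4 dvd Sv f x0 m i - Pv f' f x0 i * Sv f x0 m 0"
proof (induction i)
  case 0 then show ?case by (simp add: Pv_def)
next
  case (Suc i)
  have eq: "Sv f x0 m (Suc i) - Pv f' f x0 (Suc i) * Sv f x0 m 0
      = (Sv f x0 m (Suc i) - Gv f' f x0 i * Sv f x0 m i) + Gv f' f x0 i * (Sv f x0 m i - Pv f' f x0 i * Sv f x0 m 0)"
    by (simp add: Pv_def algebra_simps)
  show ?case unfolding eq by (rule dvd_add[OF S_rec[OF m, of i] dvd_mult[OF Suc.IH]])
qed

lemma digit_rel:
  "digit (Suc m) ((f ^^ (i + 2 ^ m)) x0) mod 2 =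
   (digit (Suc m) ((f ^^ i) x0) + digit m ((f ^^ i) x0) + (Sv f x0 m i mod 4) div 2) mod 2"
proof -
  let ?a = "res ((f ^^ i) x0) (m + 2)"
  have b: "res ((f ^^ (i + 2 ^ m)) x0) (m + 2) = ?a + 2 ^ m * Sv f x0 m i"
    using S_prop[of i m] by simp
  have dm: "digit m ((f ^^ i) x0) = (?a mod 2 ^ Suc m) div 2 ^ m"
    unfolding digit_def using res_mod[of "Suc m" "m+2" "(f ^^ i) x0"] by simp
  have "digit (Suc m) ((f ^^ (i + 2 ^ m)) x0) = (?a + 2 ^ m * Sv f x0 m i) div 2 ^ Suc m"
    unfolding digit_def using b by (simp add: numeral_2_eq_2)
  moreover have "digit (Suc m) ((f ^^ i) x0) = ?a div 2 ^ Suc m"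
    unfolding digit_def by (simp add: numeral_2_eq_2)
  ultimately show ?thesis unfolding dm using digit_arith[of ?a "Sv f x0 m i" m] S_prop[of i m] by simp
qed

lemma G_per: "Gv f' f x0 (j + 2^N) = Gv f' f x0 j"
  unfolding Gv_def using Fdep[OF udf orbit_period[OF T tr, of j N x0]] by simp

lemma Q1: "Pv f' f x0 (2^N) mod 4 = 1"
proof -
  let ?xs = "\<lambda>i. (f ^^ i) x0"
  have p2: "(2::nat)^N + 2^N = 0 + 2^Suc N" by simp
  have a1: "res (?xs (2^N + 2^N)) (N+2) - res (?xs (2^N)) (N+2) = 2^N * Sv f x0 N (2^N)"
    using S_prop[of "2^N" N] by simp
  have a0: "res (?xs (0 + 2^N)) (N+2) - res (?xs 0) (N+2) = 2^N * Sv f x0 N 0"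
    using S_prop[of 0 N] by simp
  have e: "res (?xs (0 + 2^Suc N)) (Suc N) = res (?xs 0) (Suc N)" by (rule orbit_period[OF T tr])
  have ne: "res (?xs (0 + 2^Suc N)) (Suc (Suc N)) \<noteq> res (?xs 0) (Suc (Suc N))" by (rule orbit_noperiod[OF T tr])
  obtain v where v: "res (?xs (0 + 2^Suc N)) (N+2) - res (?xs 0) (N+2) = 2^Suc N * v" "odd v"
    using odd_part[OF e ne, of "N+2"] by auto
  have "res (?xs (2^N + 2^N)) (N+2) - res (?xs 0) (N+2) = 2^N * (Sv f x0 N (2^N) + Sv f x0 N 0)"
    using a1 a0 by (simp add: algebra_simps)
  then have "(2::int)^N * (Sv f x0 N (2^N) + Sv f x0 N 0) = 2^N * (2 * v)"
    using v(1) unfolding p2 by simp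
  then have sv: "Sv f x0 N (2^N) + Sv f x0 N 0 = 2 * v" by simp
  show ?thesis
    by (rule q4[OF conjunct2[OF S_prop[of 0 N]] v(2) S_prod[OF le_refl, of "2^N"] sv])
qed

lemma P_per: "4 dvd Pv f' f x0 (i + 2^N) - Pv f' f x0 i * Pv f' f x0 (2^N)"
proof (induction i)
  case 0 then show ?case by (simp add: Pv_def)
next
  case (Suc i)
  have eq: "Pv f' f x0 (Suc i + 2^N) - Pv f' f x0 (Suc i) * Pv f' f x0 (2^N)
    = Gv f' f x0 i * (Pv f' f x0 (i + 2^N) - Pv f' f x0 i * Pv f' f x0 (2^N))"
    using G_per[of i] by (simp add: Pv_def algebra_simps)
  show ?case unfolding eq by (rule dvd_mult[OF Suc.IH])
qed

lemma P_mod: "Pv f' f x0 (i + 2^N) mod 4 = Pv f' f x0 i mod 4"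
proof -
  have "Pv f' f x0 (i + 2^N) mod 4 = (Pv f' f x0 i * Pv f' f x0 (2^N)) mod 4"
    using P_per[of i] by (simp add: mod_eq_dvd_iff)
  also have "\<dots> = (Pv f' f x0 i * (Pv f' f x0 (2^N) mod 4)) mod 4" by (simp add: mod_mult_right_eq)
  finally show ?thesis using Q1 by simp
qed

end

lemma fin_comb:
  fixes A B C D E F s t p :: int
  shows "A mod 2 = (B + C + s) mod 2 \<Longrightarrow> D mod 2 = (E + F + t) mod 2 \<Longrightarrow> s mod 2 = (t + p) mod 2
    \<Longrightarrow> A mod 2 = (C + B + F + E + D + p) mod 2"
proof -
  assume h: "A mod 2 = (B + C + s) mod 2" "D mod 2 = (E + F + t) mod 2" "s mod 2 = (t + p) mod 2"
  have d1: "2 dvd A - (B + C + s)" and d2: "2 dvd D - (E + F + t)" and d3: "2 dvd s - (t + p)"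
    using h by (simp_all only: mod_eq_dvd_iff)
  have eq: "A - (C + B + F + E + D + p) = (A - (B + C + s)) - (D - (E + F + t)) + (s - (t + p)) - 2 * (E + F)"
    by (simp add: algebra_simps)
  have "2 dvd A - (C + B + F + E + D + p)"
    unfolding eq by (intro dvd_diff dvd_add d1 d2 d3 dvd_triv_left)
  then show ?thesis by (simp only: mod_eq_dvd_iff)
qed

theorem theorem3p1:
  fixes f :: "z2 \<Rightarrow> z2" and x0 :: z2
  assumes "is_T_function f" and "transitive f" and "unif_diff f 2"
  defines "\<chi> \<equiv> (\<lambda>n i. digit n ((f ^^ i) x0))"
  shows "\<exists>y :: nat \<Rightarrow> int. (\<forall>i. y i \<in> {0, 1}) \<and>
           (\<exists>K. K \<le> N_const 2 f \<and> (\<forall>i. y (i + 2 ^ K) = y i) \<and>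
                 (\<forall>p. 0 < p \<and> p < 2 ^ K \<longrightarrow> \<not> (\<forall>i. y (i + p) = y i))) \<and>
           (\<forall>n i. n \<ge> N_const 2 f + 1 \<longrightarrow>
              (\<chi> n (i + 2 ^ (n - 1))) mod 2 = ( \<chi> (n - 1) i + \<chi> n i + \<chi> (n - 1) 0 + \<chi> n 0
                 + \<chi> n (2 ^ (n - 1)) + y i) mod 2)"
proof -
  define N where "N = N_const 2 f"
  have "\<exists>K. udiff_with f 2 K" using assms(3) unfolding unif_diff_def .
  then have "udiff_with f 2 N" unfolding N_def N_const_def by (rule LeastI_ex)
  then obtain f' where udf: "UDF f f' N" unfolding udiff_with_def UDF_def by blast
  define y where "y i = (Pv f' f x0 i mod 4) div 2" for i
  have y01: "\<forall>i. y i \<in> {0, 1}"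
  proof
    fix i
    have "0 \<le> Pv f' f x0 i mod 4" "Pv f' f x0 i mod 4 < 4" by simp_all
    then show "y i \<in> {0, 1}" unfolding y_def by auto
  qed
  have yper: "\<forall>i. y (i + 2^N) = y i" using P_mod[OF assms(1,2) udf] by (simp add: y_def)
  obtain K where K: "K \<le> N" "\<forall>i. y (i + 2 ^ K) = y i"
      "\<forall>p. 0 < p \<and> p < 2 ^ K \<longrightarrow> \<not> (\<forall>i. y (i + p) = y i)"
    using min_period[OF yper] by blast
  have rel: "(\<chi> n (i + 2 ^ (n - 1))) mod 2 = ( \<chi> (n - 1) i + \<chi> n i + \<chi> (n - 1) 0 + \<chi> n 0
                 + \<chi> n (2 ^ (n - 1)) + y i) mod 2" if n: "n \<ge> N + 1" for n i
  proof -
    obtain m where nm: "n = Suc m" and mN: "N \<le> m" using n by (cases n) auto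
    have d1: "digit (Suc m) ((f ^^ (i + 2 ^ m)) x0) mod 2 =
      (digit (Suc m) ((f ^^ i) x0) + digit m ((f ^^ i) x0) + (Sv f x0 m i mod 4) div 2) mod 2"
      by (rule digit_rel[OF assms(1,2) udf])
    have d0: "digit (Suc m) ((f ^^ (2 ^ m)) x0) mod 2 =
      (digit (Suc m) ((f ^^ 0) x0) + digit m ((f ^^ 0) x0) + (Sv f x0 m 0 mod 4) div 2) mod 2"
      using digit_rel[OF assms(1,2) udf, where m=m and i=0] by simp
    have c: "((Sv f x0 m i mod 4) div 2) mod 2 = ((Sv f x0 m 0 mod 4) div 2 + (Pv f' f x0 i mod 4) div 2) mod 2"
      by (rule comb4[OF conjunct2[OF S_prop[OF assms(1,2) udf, where i=0 and m=m]] conjunct2[OF S_prop[OF assms(1,2) udf, where i=i and m=m]]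
            S_prod[OF assms(1,2) udf mN]])
    have yi: "y i = (Pv f' f x0 i mod 4) div 2" by (simp add: y_def)
    show ?thesis unfolding \<chi>_def nm diff_Suc_1 yi using fin_comb[OF d1 d0 c] by simp
  qed
  show ?thesis
  proof (rule exI[of _ y], intro conjI)
    show "\<forall>i. y i \<in> {0, 1}" by (rule y01)
    show "\<exists>K. K \<le> N_const 2 f \<and> (\<forall>i. y (i + 2 ^ K) = y i) \<and>
                 (\<forall>p. 0 < p \<and> p < 2 ^ K \<longrightarrow> \<not> (\<forall>i. y (i + p) = y i))"
      using K unfolding N_def by blast
    show "\<forall>n i. n \<ge> N_const 2 f + 1 \<longrightarrow>
              (\<chi> n (i + 2 ^ (n - 1))) mod 2 = ( \<chi> (n - 1) i + \<chi> n i + \<chi> (n - 1) 0 + \<chi> n 0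
                 + \<chi> n (2 ^ (n - 1)) + y i) mod 2"
      using rel unfolding N_def by blast
  qed
qed

end
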